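(* Let $N\ge1$, $k\in\mathbb{Z}$, $m\in\mathbb{Z}_{>0}$, $\Gamma\in\{\Gamma_0(N),\Gamma_1(N)\}$, and let $\psi\in J^N_{k,\frac mN}(\Gamma)$ be meromorphic with simple poles at $z=z_s=\alpha\tau+\beta$ for $s=(\alpha,\beta)\in S(\psi)\subset\mathbb{Q}^2$. Then $D_{(\alpha+\lambda,\beta+\mu)}(\tau)=\mathbf{e}(\frac mN(\mu\alpha-\lambda\beta))D_{(\alpha,\beta)}(\tau)$ for $(\lambda,\mu)\in N\mathbb{Z}\times\mathbb{Z}$, and $D_s(\frac{a\tau+b}{c\tau+d})=(c\tau+d)^{k-1}D_{s\gamma}(\tau)$ for $\gamma=\begin{pmatrix}a&b\\c&d\end{pmatrix}\in\Gamma$, where $s\gamma=(a\alpha+c\beta,b\alpha+d\beta)$.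
   Context: $\mathbf{e}(t)=e^{2\pi it}$. $\Gamma_0(N)$: $c\equiv0\bmod N$; $\Gamma_1(N)$: also $a\equiv d\equiv1\bmod N$. $J^N_{k,\frac mN}(\Gamma)$: functions $\psi$ on $\mathbb{H}\times\mathbb{C}$ with $\psi(\frac{a\tau+b}{c\tau+d},\frac z{c\tau+d})=(c\tau+d)^k\mathbf{e}(\frac mN\frac{cz^2}{c\tau+d})\psi(\tau,z)$ for $\gamma\in\Gamma$ and $\psi(\tau,z+\lambda\tau+\mu)=\mathbf{e}(-\frac mN(\lambda^2\tau+2\lambda z+\lambda\mu))\psi(\tau,z)$ for $(\lambda,\mu)\in N\mathbb{Z}\times\mathbb{Z}$. $D_s(\tau)=2\pi i\,\mathbf{e}(\frac mN\alpha z_s)\operatorname{Res}_{z=z_s}\psi(\tau,z)$ for $s\in S(\psi)$. *)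

theory Defs
  imports "HOL-Complex_Analysis.Complex_Analysis"
begin

definition ee :: "complex \<Rightarrow> complex" where
  "ee t = exp (2 * of_real pi * \<i> * t)"

text \<open>Integer matrices (a,b,c,d) = [[a,b],[c,d]] of determinant one.\<close>
definition Gamma0 :: "nat \<Rightarrow> (int \<times> int \<times> int \<times> int) set" where
  "Gamma0 N = {(a,b,c,d). a*d - b*c = 1 \<and> int N dvd c}"

definition Gamma1 :: "nat \<Rightarrow> (int \<times> int \<times> int \<times> int) set" where
  "Gamma1 N = {(a,b,c,d). a*d - b*c = 1 \<and> int N dvd c \<and> a mod int N = 1 mod int N \<and> d mod int N = 1 mod int N}"

definition zpt :: "rat \<times> rat \<Rightarrow> complex \<Rightarrow> complex" where
  "zpt s \<tau> = of_rat (fst s) * \<tau> + of_rat (snd s)"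

definition poles :: "(rat \<times> rat) set \<Rightarrow> complex \<Rightarrow> complex set" where
  "poles S \<tau> = {zpt s \<tau> | s. s \<in> S}"

definition Dres :: "(complex \<Rightarrow> complex \<Rightarrow> complex) \<Rightarrow> int \<Rightarrow> nat \<Rightarrow> rat \<times> rat \<Rightarrow> complex \<Rightarrow> complex" where
  "Dres \<psi> m N s \<tau> = 2 * of_real pi * \<i> *
     ee (of_int m / of_nat N * of_rat (fst s) * zpt s \<tau>) * residue (\<psi> \<tau>) (zpt s \<tau>)"

end

theory Submission imports Defs begin

lemma res_ev:
  assumes "h analytic_on {p}" "eventually (\<lambda>w. f w = h w / (w - p)) (at p)"
  shows "residue f p = h p"
proof -
  obtain S where S: "open S" "p \<in> S" "h holomorphic_on S" using assms(1) analytic_at by blast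
  have "residue f p = residue (\<lambda>w. h w / (w - p)) p"
    by (rule residue_cong[OF assms(2) refl])
  also have "\<dots> = h p" by (rule residue_simple[OF S])
  finally show ?thesis .
qed

lemma simple_rep:
  assumes "f meromorphic_on {p}" "is_pole f p" "zorder f p = -1"
  shows "\<exists>h. h analytic_on {p} \<and> eventually (\<lambda>w. f w = h w / (w - p)) (at p)"
proof -
  have "isolated_singularity_at f p" using assms(1) meromorphic_on_isolated_singularity by blast
  then obtain r where r: "r > 0" "f analytic_on ball p r - {p}"
    by (auto simp: isolated_singularity_at_def)
  have hol: "f holomorphic_on ball p r - {p}"
    using r(2) analytic_imp_holomorphic by blast
  from zorder_exist_pole[OF hol _ _ assms(2)] r(1) assms(3)
  obtain r' where r': "r' > 0" "zor_poly f p holomorphic_on cball p r'"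
     "\<forall>w\<in>cball p r' - {p}. f w = zor_poly f p w / (w - p)"
    by auto
  have "zor_poly f p analytic_on {p}"
    unfolding analytic_at using r' by (intro exI[of _ "ball p r'"]) (auto intro: holomorphic_on_subset)
  moreover have "eventually (\<lambda>w. w \<in> ball p r' - {p}) (at p)"
    using r'(1) by (intro eventually_at_in_open) auto
  hence "eventually (\<lambda>w. f w = zor_poly f p w / (w - p)) (at p)"
    by (rule eventually_mono) (use r'(3) in auto)
  ultimately show ?thesis by blast
qed

lemma ev_shift:
  assumes "eventually P (at (p::complex))"
  shows "eventually (\<lambda>z. P (z - w)) (at (p + w))"
proof -
  have "filterlim (\<lambda>z. z - w) (at p) (at (p + w))"
    unfolding filterlim_at
  proof (intro conjI)
    have "eventually (\<lambda>z. z \<noteq> p + w) (at (p + w))" by (simp add: eventually_at_filter)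
    thus "eventually (\<lambda>z. z - w \<in> UNIV \<and> z - w \<noteq> p) (at (p + w))"
      by (rule eventually_mono) auto
  qed (auto intro!: tendsto_eq_intros)
  from eventually_compose_filterlim[OF assms this] show ?thesis .
qed

lemma ev_scale:
  assumes "eventually P (at (q::complex))" "j \<noteq> 0"
  shows "eventually (\<lambda>z. P (z / j)) (at (j * q))"
proof -
  have "filterlim (\<lambda>z. z / j) (at q) (at (j * q))"
    unfolding filterlim_at
  proof (intro conjI)
    have "eventually (\<lambda>z. z \<noteq> j * q) (at (j * q))" by (simp add: eventually_at_filter)
    thus "eventually (\<lambda>z. z / j \<in> UNIV \<and> z / j \<noteq> q) (at (j * q))"
      by (rule eventually_mono) (use assms(2) in \<open>auto simp: field_simps\<close>)
  qed (use assms(2) in \<open>auto intro!: tendsto_eq_intros\<close>)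
  from eventually_compose_filterlim[OF assms(1) this] show ?thesis .
qed

lemma moeb:
  assumes "Im \<tau> > 0" "a * d - b * c = (1::int)"
  shows "of_int c * \<tau> + of_int d \<noteq> 0" "Im ((of_int a * \<tau> + of_int b) / (of_int c * \<tau> + of_int d)) > 0"
proof -
  show nz: "of_int c * \<tau> + of_int d \<noteq> 0"
  proof
    assume h: "of_int c * \<tau> + of_int d = 0"
    hence "Im (of_int c * \<tau> + of_int d) = 0" by simp
    hence "c = 0" using assms(1) by simp
    with h have "d = 0" by simp
    with assms(2) \<open>c = 0\<close> show False by simp
  qed
  have num: "Im (of_int a * \<tau> + of_int b) * Re (of_int c * \<tau> + of_int d) - Re (of_int a * \<tau> + of_int b) * Im (of_int c * \<tau> + of_int d)
      = of_int (a*d - b*c) * Im \<tau>"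
    by (simp add: algebra_simps)
  have den: "(Re (of_int c * \<tau> + of_int d))\<^sup>2 + (Im (of_int c * \<tau> + of_int d))\<^sup>2 > 0"
    using nz by (metis complex_eq_0 less_eq_real_def not_le sum_power2_ge_zero)
  show "Im ((of_int a * \<tau> + of_int b) / (of_int c * \<tau> + of_int d)) > 0"
    unfolding Im_divide num using assms den by simp
qed

lemma ee_add: "ee x * ee y = ee (x + y)"
  unfolding ee_def by (simp add: exp_add[symmetric] algebra_simps)

lemma ee_nz: "ee x \<noteq> 0"
  unfolding ee_def by simp

theorem proposition4p3:
  fixes N :: nat and k m :: int
    and \<Gamma> :: "(int \<times> int \<times> int \<times> int) set"
    and \<psi> :: "complex \<Rightarrow> complex \<Rightarrow> complex"
    and S :: "(rat \<times> rat) set"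
  assumes N: "N \<ge> 1" and m: "m > 0"
    and Gam: "\<Gamma> = Gamma0 N \<or> \<Gamma> = Gamma1 N"
    and mero: "\<And>\<tau>. Im \<tau> > 0 \<Longrightarrow> \<psi> \<tau> meromorphic_on UNIV"
    and hol_z: "\<And>\<tau>. Im \<tau> > 0 \<Longrightarrow> \<psi> \<tau> analytic_on (UNIV - poles S \<tau>)"
    and hol_tau: "\<And>z. (\<lambda>\<tau>. \<psi> \<tau> z) holomorphic_on {\<tau>. Im \<tau> > 0 \<and> z \<notin> poles S \<tau>}"
    and pole_set: "\<And>\<tau>. Im \<tau> > 0 \<Longrightarrow> {z. is_pole (\<psi> \<tau>) z} = poles S \<tau>"
    and simple: "\<And>\<tau> z. Im \<tau> > 0 \<Longrightarrow> z \<in> poles S \<tau> \<Longrightarrow> zorder (\<psi> \<tau>) z = -1"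
    and modular: "\<And>a b c d \<tau> z. (a,b,c,d) \<in> \<Gamma> \<Longrightarrow> Im \<tau> > 0 \<Longrightarrow> z \<notin> poles S \<tau> \<Longrightarrow>
        \<psi> ((of_int a * \<tau> + of_int b) / (of_int c * \<tau> + of_int d)) (z / (of_int c * \<tau> + of_int d))
        = (of_int c * \<tau> + of_int d) powi k
          * ee (of_int m / of_nat N * (of_int c * z\<^sup>2 / (of_int c * \<tau> + of_int d))) * \<psi> \<tau> z"
    and elliptic: "\<And>l u \<tau> z. int N dvd l \<Longrightarrow> Im \<tau> > 0 \<Longrightarrow> z \<notin> poles S \<tau> \<Longrightarrow>
        \<psi> \<tau> (z + of_int l * \<tau> + of_int u)
        = ee (- (of_int m / of_nat N) * (of_int l ^ 2 * \<tau> + 2 * of_int l * z + of_int l * of_int u)) * \<psi> \<tau> z"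
  shows "(\<forall>\<alpha> \<beta> l u \<tau>. (\<alpha>, \<beta>) \<in> S \<longrightarrow> int N dvd l \<longrightarrow> Im \<tau> > 0 \<longrightarrow>
            Dres \<psi> m N (\<alpha> + of_int l, \<beta> + of_int u) \<tau>
            = ee (of_int m / of_nat N * (of_int u * of_rat \<alpha> - of_int l * of_rat \<beta>)) * Dres \<psi> m N (\<alpha>, \<beta>) \<tau>)
       \<and> (\<forall>\<alpha> \<beta> a b c d \<tau>. (\<alpha>, \<beta>) \<in> S \<longrightarrow> (a,b,c,d) \<in> \<Gamma> \<longrightarrow> Im \<tau> > 0 \<longrightarrow>
            Dres \<psi> m N (\<alpha>, \<beta>) ((of_int a * \<tau> + of_int b) / (of_int c * \<tau> + of_int d))
            = (of_int c * \<tau> + of_int d) powi (k - 1)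
              * Dres \<psi> m N (of_int a * \<alpha> + of_int c * \<beta>, of_int b * \<alpha> + of_int d * \<beta>) \<tau>)"
proof (intro conjI allI impI)
  fix \<alpha> \<beta> :: rat and l u :: int and \<tau> :: complex
  assume sS: "(\<alpha>, \<beta>) \<in> S" and ldvd: "int N dvd l" and tau: "Im \<tau> > 0"
  define p where "p = zpt (\<alpha>, \<beta>) \<tau>"
  define w where "w = of_int l * \<tau> + (of_int u :: complex)"
  define G where "G = (\<lambda>y. ee (- (of_int m / of_nat N) * (of_int l ^ 2 * \<tau> + 2 * of_int l * y + of_int l * of_int u)))"
  have pS: "p \<in> poles S \<tau>" using sS unfolding p_def poles_def by blast
  have pole: "is_pole (\<psi> \<tau>) p" using pole_set[OF tau] pS by blast
  have zo: "zorder (\<psi> \<tau>) p = -1" using simple[OF tau pS] .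
  have mp: "\<psi> \<tau> meromorphic_on {p}" using mero[OF tau] meromorphic_on_subset by blast
  obtain h where h: "h analytic_on {p}" "eventually (\<lambda>y. \<psi> \<tau> y = h y / (y - p)) (at p)"
    using simple_rep[OF mp pole zo] by blast
  have np: "eventually (\<lambda>y. \<not> is_pole (\<psi> \<tau>) y) (at p)"
    using eventually_not_pole meromorphic_on_isolated_singularity[OF mp] by blast
  have "eventually (\<lambda>y. \<psi> \<tau> (y + w) = G y * (h y / (y - p))) (at p)"
    using np h(2)
  proof eventually_elim
    case (elim y)
    have "y \<notin> poles S \<tau>" using elim(1) pole_set[OF tau] by blast
    from elliptic[OF ldvd tau this] elim(2) show ?case
      by (simp add: G_def w_def add.assoc)
  qed
  from ev_shift[OF this, of w]
  have ev: "eventually (\<lambda>z. \<psi> \<tau> z = (G (z - w) * h (z - w)) / (z - (p + w))) (at (p + w))"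
    by (rule eventually_mono) (simp add: algebra_simps)
  have Gan: "G analytic_on UNIV" unfolding G_def ee_def by (intro analytic_intros)
  have "(\<lambda>z. z - w) analytic_on {p + w}" by (intro analytic_intros)
  hence "(h \<circ> (\<lambda>z. z - w)) analytic_on {p + w}"
    by (rule analytic_on_compose) (use h(1) in simp)
  moreover have "(G \<circ> (\<lambda>z. z - w)) analytic_on {p + w}"
    by (rule analytic_on_compose) (auto intro: analytic_intros analytic_on_subset[OF Gan])
  ultimately have Han: "(\<lambda>z. G (z - w) * h (z - w)) analytic_on {p + w}"
    by (simp add: o_def analytic_on_mult)
  have r1: "residue (\<psi> \<tau>) (p + w) = G p * h p"
    using res_ev[OF Han ev] by simp
  have r0: "residue (\<psi> \<tau>) p = h p" using res_ev[OF h] .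
  have zp: "zpt (\<alpha> + of_int l, \<beta> + of_int u) \<tau> = p + w"
    by (simp add: zpt_def p_def w_def algebra_simps of_rat_add)
  have ex: "ee (of_int m / of_nat N * of_rat (\<alpha> + of_int l) * (p + w)) * G p
      = ee (of_int m / of_nat N * (of_int u * of_rat \<alpha> - of_int l * of_rat \<beta>)) * ee (of_int m / of_nat N * of_rat \<alpha> * p)"
    unfolding G_def ee_add
    by (rule arg_cong[where f=ee]) (use N in \<open>simp add: p_def w_def zpt_def field_simps power2_eq_square of_rat_add\<close>)
  show "Dres \<psi> m N (\<alpha> + of_int l, \<beta> + of_int u) \<tau>
            = ee (of_int m / of_nat N * (of_int u * of_rat \<alpha> - of_int l * of_rat \<beta>)) * Dres \<psi> m N (\<alpha>, \<beta>) \<tau>"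
    unfolding Dres_def fst_conv snd_conv zp r1 p_def[symmetric] r0
    using ex by (simp add: algebra_simps)
next
  show "Dres \<psi> m N (\<alpha>, \<beta>) ((of_int a * \<tau> + of_int b) / (of_int c * \<tau> + of_int d))
            = (of_int c * \<tau> + of_int d) powi (k - 1)
              * Dres \<psi> m N (of_int a * \<alpha> + of_int c * \<beta>, of_int b * \<alpha> + of_int d * \<beta>) \<tau>"
    if sS: "(\<alpha>, \<beta>) \<in> S" and gG: "(a, b, c, d) \<in> \<Gamma>" and tau: "Im \<tau> > 0" for \<alpha> \<beta> a b c d \<tau>
  proof -
    have det: "a * d - b * c = 1" using gG Gam by (auto simp: Gamma0_def Gamma1_def)
    define j where "j = of_int c * \<tau> + (of_int d :: complex)"
    define \<tau>' where "\<tau>' = (of_int a * \<tau> + of_int b) / j"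
    have jnz: "j \<noteq> 0" using moeb[OF tau det] unfolding j_def by blast
    have tau': "Im \<tau>' > 0" using moeb[OF tau det] unfolding \<tau>'_def j_def by blast
    define q where "q = zpt (\<alpha>, \<beta>) \<tau>'"
    define p0 where "p0 = zpt (of_int a * \<alpha> + of_int c * \<beta>, of_int b * \<alpha> + of_int d * \<beta>) \<tau>"
    have detc: "of_int a * of_int d - of_int b * of_int c = (1::complex)"
      using arg_cong[OF det, of "of_int :: int \<Rightarrow> complex"] by simp
    have p0q: "p0 = j * q"
      unfolding p0_def q_def zpt_def \<tau>'_def using jnz
      by (simp add: field_simps of_rat_add of_rat_mult j_def)
    define E where "E = (\<lambda>z. ee (of_int m / of_nat N * (of_int c * z\<^sup>2 / j)))"
    have qS: "q \<in> poles S \<tau>'" using sS unfolding q_def poles_def by blast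
    have pole: "is_pole (\<psi> \<tau>') q" using pole_set[OF tau'] qS by blast
    have zo: "zorder (\<psi> \<tau>') q = -1" using simple[OF tau' qS] .
    have mq: "\<psi> \<tau>' meromorphic_on {q}" using mero[OF tau'] meromorphic_on_subset by blast
    obtain h where h: "h analytic_on {q}" "eventually (\<lambda>y. \<psi> \<tau>' y = h y / (y - q)) (at q)"
      using simple_rep[OF mq pole zo] by blast
    have mp: "\<psi> \<tau> meromorphic_on {p0}" using mero[OF tau] meromorphic_on_subset by blast
    have np: "eventually (\<lambda>y. \<not> is_pole (\<psi> \<tau>) y) (at p0)"
      using eventually_not_pole meromorphic_on_isolated_singularity[OF mp] by blast
    have hs: "eventually (\<lambda>z. \<psi> \<tau>' (z / j) = h (z / j) / (z / j - q)) (at p0)"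
      unfolding p0q by (rule ev_scale[OF h(2) jnz])
    have neq: "eventually (\<lambda>z. z \<noteq> p0) (at p0)" by (simp add: eventually_at_filter)
    have jk: "j powi k \<noteq> 0" using jnz by simp
    have ev: "eventually (\<lambda>z. \<psi> \<tau> z = (j * h (z / j) / (j powi k * E z)) / (z - p0)) (at p0)"
      using np hs neq
    proof eventually_elim
      case (elim z)
      have "z \<notin> poles S \<tau>" using elim(1) pole_set[OF tau] by blast
      from modular[OF gG tau this]
      have "\<psi> \<tau>' (z / j) = j powi k * E z * \<psi> \<tau> z"
        unfolding \<tau>'_def j_def E_def by simp
      moreover have "E z \<noteq> 0" unfolding E_def by (rule ee_nz)
      ultimately have "\<psi> \<tau> z = \<psi> \<tau>' (z / j) / (j powi k * E z)"
        using jk by (simp add: field_simps)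
      with elim(2) have "\<psi> \<tau> z = h (z / j) / (z / j - q) / (j powi k * E z)"
        by simp
      also have "z / j - q = (z - p0) / j" using jnz by (simp add: p0q field_simps)
      finally show ?case using jnz by (simp add: mult_ac)
    qed
    have "(\<lambda>z. z / j) analytic_on {p0}" using jnz by (intro analytic_intros) auto
    hence "(h \<circ> (\<lambda>z. z / j)) analytic_on {p0}"
      by (rule analytic_on_compose) (use h(1) jnz in \<open>simp add: p0q\<close>)
    hence Han: "(\<lambda>z. j * h (z / j) / (j powi k * E z)) analytic_on {p0}"
      unfolding E_def ee_def o_def using jk jnz by (intro analytic_intros) auto
    have r1: "residue (\<psi> \<tau>) p0 = j * h q / (j powi k * E p0)"
      using res_ev[OF Han ev] jnz by (simp add: p0q)
    have r0: "residue (\<psi> \<tau>') q = h q" using res_ev[OF h] .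
    have pk: "j powi (k - 1) = j powi k / j" using jnz by (simp add: power_int_diff)
    have ex: "ee (of_int m / of_nat N * of_rat \<alpha> * q) * E p0
       = ee (of_int m / of_nat N * of_rat (of_int a * \<alpha> + of_int c * \<beta>) * p0)"
    proof -
      define x where "x = (of_rat \<alpha> :: complex)"
      define y where "y = (of_rat \<beta> :: complex)"
      have jq: "j * q = x * (of_int a * \<tau> + of_int b) + y * j"
        unfolding q_def zpt_def \<tau>'_def x_def y_def using jnz by (simp add: field_simps)
      have key: "x + of_int c * (j * q) = (of_int a * x + of_int c * y) * j"
        using detc jq unfolding j_def by algebra
      have "of_int m / of_nat N * x * q + of_int m / of_nat N * (of_int c * (j * q)\<^sup>2 / j)
          = of_int m / of_nat N * (of_int a * x + of_int c * y) * (j * q)"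
      proof -
        have "of_int c * (j * q)\<^sup>2 / j = of_int c * (j * q) * q" using jnz by (simp add: power2_eq_square)
        hence "x * q + of_int c * (j * q)\<^sup>2 / j = (x + of_int c * (j * q)) * q" by (simp add: algebra_simps)
        also have "\<dots> = (of_int a * x + of_int c * y) * (j * q)" using key by (simp add: algebra_simps)
        finally have eq: "x * q + of_int c * (j * q)\<^sup>2 / j = (of_int a * x + of_int c * y) * (j * q)" .
        show ?thesis using arg_cong[OF eq, of "\<lambda>v. of_int m / of_nat N * v"]
          by (simp only: mult.assoc distrib_left[symmetric])
      qed
      thus ?thesis unfolding E_def ee_add p0q x_def y_def by (simp add: of_rat_add of_rat_mult)
    qed
    show ?thesis
      unfolding Dres_def fst_conv snd_conv \<tau>'_def[symmetric] j_def[symmetric] q_def[symmetric] p0_def[symmetric] r1 r0 pk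
      using jnz jk ex[symmetric] ee_nz[of "of_int m / of_nat N * (of_int c * p0\<^sup>2 / j)"]
      unfolding E_def by (simp add: field_simps)
  qed
qed

end
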